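(* Consider only finite-dimensional Hilbert spaces $E$ (i.e. $E=\mathbb{C}^n$, $n\geq1$). Let $(D(E))$ be a free set with $D(E)\subseteq\mathcal{B}(E)^k$ such that each $D(E)$ contains an open neighborhood of $0$, and let $F:D(E)\to\mathcal{B}(E)$ be a free function which is complex-linear, i.e. $F(\alpha X+\beta Y)=\alpha F(X)+\beta F(Y)$ whenever $\alpha,\beta\in\mathbb{C}$ and $X,Y,\alpha X+\beta Y\in D(E)$. Then there exist $a_1,\dots,a_k\in\mathbb{C}$ (independent of $E$) such that $$F(X)=\sum_{j=1}^k a_jX_j\qquad\text{for all } X\in D(E)\text{ and all } E.$$
   Context: $\mathcal{B}(E)$: linear operators on $E$. A free set is a collection $(D(E))$ with $U^*D(E)U\subseteq D(K)$ for unitaries $U:K\to E$ (where $U^*XU=(U^*X_1U,\dots,U^*X_kU)$) and $D(E)\oplus D(K)\subseteq D(E\oplus K)$. A free function $F:D(E)\to\mathcal{B}(E)$ satisfies $F(U^*A_1U,\dots,U^*A_kU)=U^*F(A)U$ for unitaries $U$ and $F(A_1\oplus B_1,\dots,A_k\oplus B_k)=F(A)\oplus F(B)$. *)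

theory Defs
  imports Complex_Main "Jordan_Normal_Form.Matrix"
begin

text \<open>Operators on the Hilbert space C^n are represented as n x n complex matrices.
  A k-tuple of operators is a list of length k of n x n matrices.\<close>

definition adj :: "complex mat \<Rightarrow> complex mat" where
  "adj U = mat (dim_col U) (dim_row U) (\<lambda>(i,j). cnj (U $$ (j,i)))"

definition unitary_mat :: "nat \<Rightarrow> complex mat \<Rightarrow> bool" where
  "unitary_mat n U \<longleftrightarrow> U \<in> carrier_mat n n \<and> adj U * U = 1\<^sub>m n \<and> U * adj U = 1\<^sub>m n"

definition tuples :: "nat \<Rightarrow> nat \<Rightarrow> complex mat list set" where
  "tuples k n = {X. length X = k \<and> (\<forall>i<k. X ! i \<in> carrier_mat n n)}"

definition conj_tuple :: "complex mat \<Rightarrow> complex mat list \<Rightarrow> complex mat list" where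
  "conj_tuple U X = map (\<lambda>A. adj U * A * U) X"

definition dsum :: "complex mat \<Rightarrow> complex mat \<Rightarrow> complex mat" where
  "dsum A B = four_block_mat A (0\<^sub>m (dim_row A) (dim_col B)) (0\<^sub>m (dim_row B) (dim_col A)) B"

definition dsum_tuple :: "complex mat list \<Rightarrow> complex mat list \<Rightarrow> complex mat list" where
  "dsum_tuple X Y = map2 dsum X Y"

definition lin_comb_tuple :: "complex \<Rightarrow> complex mat list \<Rightarrow> complex \<Rightarrow> complex mat list \<Rightarrow> complex mat list" where
  "lin_comb_tuple \<alpha> X \<beta> Y = map2 (\<lambda>A B. \<alpha> \<cdot>\<^sub>m A + \<beta> \<cdot>\<^sub>m B) X Y"

definition free_set :: "nat \<Rightarrow> (nat \<Rightarrow> complex mat list set) \<Rightarrow> bool" where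
  "free_set k D \<longleftrightarrow>
     (\<forall>n\<ge>1. D n \<subseteq> tuples k n) \<and>
     (\<forall>n\<ge>1. \<forall>U X. unitary_mat n U \<longrightarrow> X \<in> D n \<longrightarrow> conj_tuple U X \<in> D n) \<and>
     (\<forall>n\<ge>1. \<forall>m\<ge>1. \<forall>X Y. X \<in> D n \<longrightarrow> Y \<in> D m \<longrightarrow> dsum_tuple X Y \<in> D (n + m))"

text \<open>D n contains an open neighbourhood of 0 in B(C^n)^k (all norms equivalent:
  use the max-entry norm).\<close>
definition contains_nbhd_0 :: "nat \<Rightarrow> (nat \<Rightarrow> complex mat list set) \<Rightarrow> bool" where
  "contains_nbhd_0 k D \<longleftrightarrow>
     (\<forall>n\<ge>1. \<exists>\<epsilon>>0. \<forall>X\<in>tuples k n.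
        (\<forall>i<k. \<forall>r<n. \<forall>c<n. cmod (X ! i $$ (r,c)) < \<epsilon>) \<longrightarrow> X \<in> D n)"

definition free_function :: "nat \<Rightarrow> (nat \<Rightarrow> complex mat list set) \<Rightarrow> (nat \<Rightarrow> complex mat list \<Rightarrow> complex mat) \<Rightarrow> bool" where
  "free_function k D F \<longleftrightarrow>
     (\<forall>n\<ge>1. \<forall>X\<in>D n. F n X \<in> carrier_mat n n) \<and>
     (\<forall>n\<ge>1. \<forall>U X. unitary_mat n U \<longrightarrow> X \<in> D n \<longrightarrow> F n (conj_tuple U X) = adj U * F n X * U) \<and>
     (\<forall>n\<ge>1. \<forall>m\<ge>1. \<forall>X Y. X \<in> D n \<longrightarrow> Y \<in> D m \<longrightarrow> F (n + m) (dsum_tuple X Y) = dsum (F n X) (F m Y))"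

definition complex_linear_on :: "(nat \<Rightarrow> complex mat list set) \<Rightarrow> (nat \<Rightarrow> complex mat list \<Rightarrow> complex mat) \<Rightarrow> bool" where
  "complex_linear_on D F \<longleftrightarrow>
     (\<forall>n\<ge>1. \<forall>\<alpha> \<beta> X Y. X \<in> D n \<longrightarrow> Y \<in> D n \<longrightarrow> lin_comb_tuple \<alpha> X \<beta> Y \<in> D n \<longrightarrow>
        F n (lin_comb_tuple \<alpha> X \<beta> Y) = \<alpha> \<cdot>\<^sub>m F n X + \<beta> \<cdot>\<^sub>m F n Y)"

end

theory Submission
  imports Defs
begin


lemma mult_entry:
  assumes "A \<in> carrier_mat n m" "B \<in> carrier_mat m p" "a < n" "b < p"
  shows "(A * B) $$ (a,b) = (\<Sum>l<m. A $$ (a,l) * B $$ (l,b))"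
  using assms by (auto simp: scalar_prod_def lessThan_atLeast0 intro!: sum.cong)

definition em :: "nat \<Rightarrow> nat \<Rightarrow> nat \<Rightarrow> complex \<Rightarrow> complex mat" where
  "em N r s x = mat N N (\<lambda>(a,b). if a = r \<and> b = s then x else 0)"

lemma em_carrier[simp]: "em N r s x \<in> carrier_mat N N" by (simp add: em_def)
lemma em_dims[simp]: "dim_row (em N r s x) = N" "dim_col (em N r s x) = N" by (auto simp: em_def)
lemma em_index[simp]: "a < N \<Longrightarrow> b < N \<Longrightarrow> em N r s x $$ (a,b) = (if a = r \<and> b = s then x else 0)"
  by (simp add: em_def)

lemma adj_carrier[simp]: "U \<in> carrier_mat n n \<Longrightarrow> adj U \<in> carrier_mat n n" by (auto simp: adj_def)
lemma adj_dims[simp]: "dim_row (adj U) = dim_col U" "dim_col (adj U) = dim_row U" by (auto simp: adj_def)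
lemma adj_index[simp]: "a < dim_col U \<Longrightarrow> b < dim_row U \<Longrightarrow> adj U $$ (a,b) = cnj (U $$ (b,a))"
  by (auto simp: adj_def)

lemma conj_em:
  assumes "U \<in> carrier_mat N N" "a < N" "b < N" "r < N" "s < N"
  shows "(adj U * em N r s x * U) $$ (a,b) = cnj (U $$ (r,a)) * x * U $$ (s,b)"
proof -
  have 1: "adj U * em N r s x \<in> carrier_mat N N" by (rule mult_carrier_mat) (use assms in auto)
  have "(adj U * em N r s x * U) $$ (a,b) = (\<Sum>l<N. (adj U * em N r s x) $$ (a,l) * U $$ (l,b))"
    by (rule mult_entry[OF 1 assms(1) assms(2,3)])
  also have "\<dots> = (\<Sum>l<N. (if l = s then cnj (U $$ (r,a)) * x * U $$ (s,b) else 0))"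
  proof (rule sum.cong[OF refl])
    fix l assume l: "l \<in> {..<N}"
    have "(adj U * em N r s x) $$ (a,l) = (\<Sum>q<N. adj U $$ (a,q) * em N r s x $$ (q,l))"
      by (rule mult_entry) (use assms l in auto)
    also have "\<dots> = (\<Sum>q<N. if q = r then (if l = s then cnj (U $$ (r,a)) * x else 0) else 0)"
      by (rule sum.cong) (use assms l in auto)
    also have "\<dots> = (if l = s then cnj (U $$ (r,a)) * x else 0)" using assms by simp
    finally show "(adj U * em N r s x) $$ (a,l) * U $$ (l,b) = (if l = s then cnj (U $$ (r,a)) * x * U $$ (s,b) else 0)"
      by simp
  qed
  also have "\<dots> = cnj (U $$ (r,a)) * x * U $$ (s,b)" using assms by simp
  finally show ?thesis .
qed

lemma sum_two:
  fixes g :: "nat \<Rightarrow> complex"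
  assumes "r \<noteq> s" "r < N" "s < N" "\<And>l. l < N \<Longrightarrow> l \<noteq> r \<Longrightarrow> l \<noteq> s \<Longrightarrow> g l = 0"
  shows "(\<Sum>l<N. g l) = g r + g s"
proof -
  have "(\<Sum>l<N. g l) = (\<Sum>l\<in>{r,s}. g l)"
    by (rule sum.mono_neutral_right) (use assms in auto)
  then show ?thesis using assms by simp
qed

lemma cnj_mult_unit: "cmod z = 1 \<Longrightarrow> cnj z * z = 1"
  by (metis complex_norm_square mult.commute of_real_1 power_one)

definition dg :: "nat \<Rightarrow> (nat \<Rightarrow> complex) \<Rightarrow> complex mat" where
  "dg N u = mat N N (\<lambda>(a,b). if a = b then u a else 0)"

lemma dg_carrier[simp]: "dg N u \<in> carrier_mat N N" by (simp add: dg_def)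
lemma dg_index[simp]: "a < N \<Longrightarrow> b < N \<Longrightarrow> dg N u $$ (a,b) = (if a = b then u a else 0)"
  by (simp add: dg_def)
lemma dg_dims[simp]: "dim_row (dg N u) = N" "dim_col (dg N u) = N" by (auto simp: dg_def)

lemma dg_conj_entry:
  assumes "A \<in> carrier_mat N N" "a < N" "b < N"
  shows "(adj (dg N u) * A * dg N u) $$ (a,b) = cnj (u a) * A $$ (a,b) * u b"
proof -
  have 1: "adj (dg N u) * A \<in> carrier_mat N N" by (rule mult_carrier_mat) (use assms in auto)
  have "(adj (dg N u) * A * dg N u) $$ (a,b) = (\<Sum>l<N. (adj (dg N u) * A) $$ (a,l) * dg N u $$ (l,b))"
    by (rule mult_entry[OF 1 _ assms(2,3)]) simp
  also have "\<dots> = (\<Sum>l<N. (if l = b then cnj (u a) * A $$ (a,b) * u b else 0))"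
  proof (rule sum.cong[OF refl])
    fix l assume l: "l \<in> {..<N}"
    have "(adj (dg N u) * A) $$ (a,l) = (\<Sum>q<N. adj (dg N u) $$ (a,q) * A $$ (q,l))"
      by (rule mult_entry) (use assms l in auto)
    also have "\<dots> = (\<Sum>q<N. if q = a then cnj (u a) * A $$ (a,l) else 0)"
      by (rule sum.cong) (use assms l in auto)
    also have "\<dots> = cnj (u a) * A $$ (a,l)" using assms by simp
    finally show "(adj (dg N u) * A) $$ (a,l) * dg N u $$ (l,b) = (if l = b then cnj (u a) * A $$ (a,b) * u b else 0)"
      using l assms by simp
  qed
  also have "\<dots> = cnj (u a) * A $$ (a,b) * u b" using assms by simp
  finally show ?thesis .
qed

lemma dg_unitary:
  assumes "\<And>a. a < N \<Longrightarrow> cmod (u a) = 1"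
  shows "unitary_mat N (dg N u)"
proof -
  have "adj (dg N u) * dg N u = 1\<^sub>m N"
  proof (rule eq_matI)
    fix a b assume ab: "a < dim_row (1\<^sub>m N)" "b < dim_col (1\<^sub>m N)"
    have "(adj (dg N u) * dg N u) $$ (a,b) = (\<Sum>l<N. adj (dg N u) $$ (a,l) * dg N u $$ (l,b))"
      by (rule mult_entry) (use ab in auto)
    also have "\<dots> = (\<Sum>l<N. if l = a then (if a = b then cnj (u a) * u a else 0) else 0)"
      by (rule sum.cong) (use ab in auto)
    also have "\<dots> = 1\<^sub>m N $$ (a,b)" using ab assms cnj_mult_unit by simp
    finally show "(adj (dg N u) * dg N u) $$ (a,b) = 1\<^sub>m N $$ (a,b)" .
  qed (auto simp: adj_def)
  moreover have "dg N u * adj (dg N u) = 1\<^sub>m N"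
  proof (rule eq_matI)
    fix a b assume ab: "a < dim_row (1\<^sub>m N)" "b < dim_col (1\<^sub>m N)"
    have "(dg N u * adj (dg N u)) $$ (a,b) = (\<Sum>l<N. dg N u $$ (a,l) * adj (dg N u) $$ (l,b))"
      by (rule mult_entry) (use ab in auto)
    also have "\<dots> = (\<Sum>l<N. if l = a then (if a = b then cnj (u a) * u a else 0) else 0)"
      by (rule sum.cong) (use ab in auto)
    also have "\<dots> = 1\<^sub>m N $$ (a,b)" using ab assms cnj_mult_unit by simp
    finally show "(dg N u * adj (dg N u)) $$ (a,b) = 1\<^sub>m N $$ (a,b)" .
  qed (auto simp: adj_def)
  ultimately show ?thesis by (simp add: unitary_mat_def)
qed

definition hh :: complex where "hh = complex_of_real (sqrt (1/2))"

lemma hh_sq: "hh * hh = 1/2"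
proof -
  have "sqrt (1/2) * sqrt (1/2) = (1/2::real)" by simp
  then have "complex_of_real (sqrt (1/2) * sqrt (1/2)) = 1/2" by simp
  then show ?thesis unfolding hh_def by (simp only: of_real_mult)
qed
  
lemma cnj_hh[simp]: "cnj hh = hh" by (simp add: hh_def)

definition rote :: "nat \<Rightarrow> nat \<Rightarrow> nat \<Rightarrow> nat \<Rightarrow> complex" where
  "rote r s a b = (if (a = r \<or> a = s) \<and> (b = r \<or> b = s) then (if a = s \<and> b = s then - hh else hh)
      else if a = b then 1 else 0)"

definition rot :: "nat \<Rightarrow> nat \<Rightarrow> nat \<Rightarrow> complex mat" where
  "rot N r s = mat N N (\<lambda>(a,b). rote r s a b)"

lemma rot_carrier[simp]: "rot N r s \<in> carrier_mat N N" by (simp add: rot_def)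
lemma rot_dims[simp]: "dim_row (rot N r s) = N" "dim_col (rot N r s) = N" by (auto simp: rot_def)
lemma rot_index[simp]: "a < N \<Longrightarrow> b < N \<Longrightarrow> rot N r s $$ (a,b) = rote r s a b"
  by (simp add: rot_def)

lemma rote_sym: "rote r s b a = rote r s a b"
  unfolding rote_def by auto
lemma rote_real[simp]: "cnj (rote r s a b) = rote r s a b"
  unfolding rote_def by auto

lemma adj_rot: "adj (rot N r s) = rot N r s"
  by (rule eq_matI) (simp_all add: rote_sym)
lemma rote_vals:
  assumes "r \<noteq> s"
  shows "rote r s r r = hh" "rote r s r s = hh" "rote r s s r = hh" "rote r s s s = - hh"
    "a \<notin> {r,s} \<Longrightarrow> rote r s a l = (if a = l then 1 else 0)"
    "l \<notin> {r,s} \<Longrightarrow> rote r s a l = (if a = l then 1 else 0)"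
  using assms unfolding rote_def by auto

lemma rot_sq: assumes "r \<noteq> s" "r < N" "s < N" shows "rot N r s * rot N r s = 1\<^sub>m N"
proof (rule eq_matI)
  fix a b assume ab: "a < dim_row (1\<^sub>m N)" "b < dim_col (1\<^sub>m N)"
  have e: "(rot N r s * rot N r s) $$ (a,b) = (\<Sum>l<N. rote r s a l * rote r s l b)"
    by (subst mult_entry[of _ N N _ N]) (use ab in auto)
  show "(rot N r s * rot N r s) $$ (a,b) = 1\<^sub>m N $$ (a,b)"
  proof (cases "a \<in> {r,s}")
    case False
    have "(\<Sum>l<N. rote r s a l * rote r s l b) = (\<Sum>l<N. if l = a then rote r s a b else 0)"
      by (rule sum.cong) (use ab False assms in \<open>auto simp: rote_vals\<close>)
    also have "\<dots> = rote r s a b" using ab by simp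
    also have "\<dots> = 1\<^sub>m N $$ (a,b)" using ab False assms by (auto simp: rote_vals)
    finally show ?thesis using e by simp
  next
    case True
    have "(\<Sum>l<N. rote r s a l * rote r s l b) = rote r s a r * rote r s r b + rote r s a s * rote r s s b"
      by (rule sum_two) (use ab True assms in \<open>auto simp: rote_vals\<close>)
    also have "\<dots> = 1\<^sub>m N $$ (a,b)"
    proof -
      from True have "a = r \<or> a = s" by auto
      moreover have "b = r \<or> b = s \<or> b \<notin> {r,s}" by auto
      ultimately show ?thesis using ab assms by (elim disjE) (simp_all add: hh_sq rote_vals)
    qed
    finally show ?thesis using e by simp
  qed
qed auto

lemma rot_unitary: "r \<noteq> s \<Longrightarrow> r < N \<Longrightarrow> s < N \<Longrightarrow> unitary_mat N (rot N r s)"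
  unfolding unitary_mat_def adj_rot using rot_sq[of r s N] rot_carrier[of N r s] by blast




definition ut :: "nat \<Rightarrow> nat \<Rightarrow> nat \<Rightarrow> complex mat \<Rightarrow> complex mat list" where
  "ut k N j M = map (\<lambda>i. if i = j then M else 0\<^sub>m N N) [0..<k]"

lemma ut_length[simp]: "length (ut k N j M) = k" by (simp add: ut_def)
lemma ut_nth[simp]: "i < k \<Longrightarrow> ut k N j M ! i = (if i = j then M else 0\<^sub>m N N)" by (simp add: ut_def)

lemma ut_tuples: "M \<in> carrier_mat N N \<Longrightarrow> ut k N j M \<in> tuples k N"
  by (auto simp: tuples_def)

lemma conj_ut: assumes "U \<in> carrier_mat N N"
  shows "conj_tuple U (ut k N j M) = ut k N j (adj U * M * U)"
proof -
  have "adj U * 0\<^sub>m N N * U = 0\<^sub>m N N"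
    using assms by (simp add: right_mult_zero_mat[of _ N N] left_mult_zero_mat[of _ N N])
  then show ?thesis by (auto simp: conj_tuple_def ut_def)
qed

lemma map2_map_upt: "map2 f (map g [0..<k]) (map h [0..<k]) = map (\<lambda>i. f (g i) (h i)) [0..<k]"
  by (rule nth_equalityI) auto

lemma lin_ut: assumes "A \<in> carrier_mat N N" "B \<in> carrier_mat N N"
  shows "lin_comb_tuple \<alpha> (ut k N j A) \<beta> (ut k N j B) = ut k N j (\<alpha> \<cdot>\<^sub>m A + \<beta> \<cdot>\<^sub>m B)"
proof -
  have "\<alpha> \<cdot>\<^sub>m 0\<^sub>m N N + \<beta> \<cdot>\<^sub>m 0\<^sub>m N N = 0\<^sub>m N N" by simp
  then show ?thesis unfolding lin_comb_tuple_def ut_def map2_map_upt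
    by (intro map_cong) auto
qed

lemma dsum_ut: assumes "A \<in> carrier_mat n n" "B \<in> carrier_mat m m"
  shows "dsum_tuple (ut k n j A) (ut k m j B) = ut k (n+m) j (dsum A B)"
proof -
  have "dsum (0\<^sub>m n n) (0\<^sub>m m m) = 0\<^sub>m (n+m) (n+m)" by (simp add: dsum_def)
  then show ?thesis using assms unfolding dsum_tuple_def ut_def map2_map_upt
    by (intro map_cong) auto
qed

lemma em_smult: "em N r s (c * x) = c \<cdot>\<^sub>m em N r s x"
  by (rule eq_matI) auto

definition small :: "nat \<Rightarrow> real \<Rightarrow> complex mat \<Rightarrow> bool" where
  "small N \<delta> M \<longleftrightarrow> M \<in> carrier_mat N N \<and> (\<forall>a<N. \<forall>b<N. cmod (M $$ (a,b)) < \<delta>)"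

lemma small_em: "r < N \<Longrightarrow> s < N \<Longrightarrow> small N \<delta> (em N r s x) \<longleftrightarrow> cmod x < \<delta>"
  unfolding small_def by (auto split: if_splits intro: le_less_trans[OF norm_ge_zero])

locale FF =
  fixes k :: nat and D :: "nat \<Rightarrow> complex mat list set" and F :: "nat \<Rightarrow> complex mat list \<Rightarrow> complex mat"
  assumes fs: "free_set k D" and nb: "contains_nbhd_0 k D" and ff: "free_function k D F" and lin: "complex_linear_on D F"
begin

lemma F_carrier: "n \<ge> 1 \<Longrightarrow> X \<in> D n \<Longrightarrow> F n X \<in> carrier_mat n n"
  using ff by (auto simp: free_function_def)
lemma F_conj: "n \<ge> 1 \<Longrightarrow> unitary_mat n U \<Longrightarrow> X \<in> D n \<Longrightarrow> F n (conj_tuple U X) = adj U * F n X * U"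
  using ff by (auto simp: free_function_def)
lemma F_dsum: "n \<ge> 1 \<Longrightarrow> m \<ge> 1 \<Longrightarrow> X \<in> D n \<Longrightarrow> Y \<in> D m \<Longrightarrow> F (n+m) (dsum_tuple X Y) = dsum (F n X) (F m Y)"
  using ff by (auto simp: free_function_def)
lemma F_lin: "n \<ge> 1 \<Longrightarrow> X \<in> D n \<Longrightarrow> Y \<in> D n \<Longrightarrow> lin_comb_tuple \<alpha> X \<beta> Y \<in> D n \<Longrightarrow>
   F n (lin_comb_tuple \<alpha> X \<beta> Y) = \<alpha> \<cdot>\<^sub>m F n X + \<beta> \<cdot>\<^sub>m F n Y"
  using lin by (auto simp: complex_linear_on_def)
lemma D_tuples: "n \<ge> 1 \<Longrightarrow> D n \<subseteq> tuples k n"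
  using fs by (auto simp: free_set_def)
lemma D_conj: "n \<ge> 1 \<Longrightarrow> unitary_mat n U \<Longrightarrow> X \<in> D n \<Longrightarrow> conj_tuple U X \<in> D n"
  using fs by (auto simp: free_set_def)
lemma D_dsum: "n \<ge> 1 \<Longrightarrow> m \<ge> 1 \<Longrightarrow> X \<in> D n \<Longrightarrow> Y \<in> D m \<Longrightarrow> dsum_tuple X Y \<in> D (n+m)"
  using fs by (auto simp: free_set_def)
lemma D_nb: "n \<ge> 1 \<Longrightarrow> \<exists>\<epsilon>>0. \<forall>X\<in>tuples k n. (\<forall>i<k. \<forall>r<n. \<forall>c<n. cmod (X ! i $$ (r,c)) < \<epsilon>) \<longrightarrow> X \<in> D n"
  using nb by (auto simp: contains_nbhd_0_def)

definition goodeps :: "nat \<Rightarrow> real \<Rightarrow> bool" where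
  "goodeps n \<epsilon> \<longleftrightarrow> \<epsilon> > 0 \<and> (\<forall>X\<in>tuples k n. (\<forall>i<k. \<forall>r<n. \<forall>c<n. cmod (X ! i $$ (r,c)) < \<epsilon>) \<longrightarrow> X \<in> D n)"

lemma goodeps_ex: "n \<ge> 1 \<Longrightarrow> \<exists>\<epsilon>. goodeps n \<epsilon>"
  using D_nb unfolding goodeps_def by blast

lemma goodeps_mono: "goodeps n \<epsilon> \<Longrightarrow> 0 < \<delta> \<Longrightarrow> \<delta> \<le> \<epsilon> \<Longrightarrow> goodeps n \<delta>"
  unfolding goodeps_def by (meson less_le_trans)

lemma ut_D: assumes "goodeps N \<delta>" "small N \<delta> M"
  shows "ut k N j M \<in> D N"
proof -
  have "ut k N j M \<in> tuples k N" using assms by (auto simp: small_def intro: ut_tuples)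
  moreover have "\<forall>i<k. \<forall>r<N. \<forall>c<N. cmod (ut k N j M ! i $$ (r,c)) < \<delta>"
    using assms by (auto simp: small_def goodeps_def)
  ultimately show ?thesis using assms(1) by (auto simp: goodeps_def)
qed


lemma small_carrier: "small N \<delta> M \<Longrightarrow> M \<in> carrier_mat N N" by (simp add: small_def)

lemma phiD: "goodeps N \<delta> \<Longrightarrow> small N \<delta> M \<Longrightarrow> F N (ut k N j M) \<in> carrier_mat N N \<or> N = 0"
  using F_carrier ut_D by (cases N) auto

lemma phi_lin:
  assumes "goodeps N \<delta>" "N \<ge> 1" "small N \<delta> A" "small N \<delta> B" "small N \<delta> (\<alpha> \<cdot>\<^sub>m A + \<beta> \<cdot>\<^sub>m B)"
  shows "F N (ut k N j (\<alpha> \<cdot>\<^sub>m A + \<beta> \<cdot>\<^sub>m B)) = \<alpha> \<cdot>\<^sub>m F N (ut k N j A) + \<beta> \<cdot>\<^sub>m F N (ut k N j B)"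
proof -
  have "lin_comb_tuple \<alpha> (ut k N j A) \<beta> (ut k N j B) = ut k N j (\<alpha> \<cdot>\<^sub>m A + \<beta> \<cdot>\<^sub>m B)"
    by (rule lin_ut) (use assms in \<open>auto simp: small_def\<close>)
  moreover have "ut k N j A \<in> D N" "ut k N j B \<in> D N" "ut k N j (\<alpha> \<cdot>\<^sub>m A + \<beta> \<cdot>\<^sub>m B) \<in> D N"
    using assms ut_D by auto
  ultimately show ?thesis using F_lin[of N "ut k N j A" "ut k N j B" \<alpha> \<beta>] assms(2) by simp
qed

lemma phi_add:
  assumes "goodeps N \<delta>" "N \<ge> 1" "small N \<delta> A" "small N \<delta> B" "small N \<delta> (A + B)"
  shows "F N (ut k N j (A + B)) = F N (ut k N j A) + F N (ut k N j B)"
proof -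
  have cA: "A \<in> carrier_mat N N" and cB: "B \<in> carrier_mat N N" using assms by (auto simp: small_def)
  have e: "1 \<cdot>\<^sub>m A + 1 \<cdot>\<^sub>m B = A + B" using cA cB by (intro eq_matI) auto
  have cFA: "F N (ut k N j A) \<in> carrier_mat N N" and cFB: "F N (ut k N j B) \<in> carrier_mat N N"
    using assms F_carrier ut_D by auto
  have "F N (ut k N j (1 \<cdot>\<^sub>m A + 1 \<cdot>\<^sub>m B)) = 1 \<cdot>\<^sub>m F N (ut k N j A) + 1 \<cdot>\<^sub>m F N (ut k N j B)"
    by (rule phi_lin) (use assms e in auto)
  also have "\<dots> = F N (ut k N j A) + F N (ut k N j B)" using cFA cFB by (intro eq_matI) auto
  finally show ?thesis using e by simp
qed

lemma phi_sc:
  assumes "goodeps N \<delta>" "N \<ge> 1" "small N \<delta> A" "small N \<delta> (c \<cdot>\<^sub>m A)"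
  shows "F N (ut k N j (c \<cdot>\<^sub>m A)) = c \<cdot>\<^sub>m F N (ut k N j A)"
proof -
  have cA: "A \<in> carrier_mat N N" using assms by (auto simp: small_def)
  have e: "c \<cdot>\<^sub>m A + 0 \<cdot>\<^sub>m A = c \<cdot>\<^sub>m A" using cA by (intro eq_matI) auto
  have cFA: "F N (ut k N j A) \<in> carrier_mat N N"
    using assms F_carrier ut_D by auto
  have "F N (ut k N j (c \<cdot>\<^sub>m A + 0 \<cdot>\<^sub>m A)) = c \<cdot>\<^sub>m F N (ut k N j A) + 0 \<cdot>\<^sub>m F N (ut k N j A)"
    by (rule phi_lin) (use assms e in auto)
  also have "\<dots> = c \<cdot>\<^sub>m F N (ut k N j A)" using cFA by (intro eq_matI) auto
  finally show ?thesis using e by simp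
qed

lemma phi_conj:
  assumes "goodeps N \<delta>" "N \<ge> 1" "small N \<delta> M" "unitary_mat N U"
  shows "F N (ut k N j (adj U * M * U)) = adj U * F N (ut k N j M) * U"
proof -
  have "U \<in> carrier_mat N N" using assms by (simp add: unitary_mat_def)
  then have "ut k N j (adj U * M * U) = conj_tuple U (ut k N j M)" by (simp add: conj_ut)
  then show ?thesis using F_conj assms ut_D by simp
qed

end



lemma ii_neq: "(\<i>::complex) \<noteq> 1" "\<i> \<noteq> - \<i>" "- \<i> \<noteq> (\<i>::complex)" by (auto simp: complex_eq_iff)

lemma zero_of_ne: "c * m = d * m \<Longrightarrow> c \<noteq> d \<Longrightarrow> (m::complex) = 0" by auto

context FF begin

lemma diag_off:
  assumes g: "goodeps N \<delta>" "N \<ge> 1" and rs: "r \<noteq> s" "r < N" "s < N" and x: "cmod x < \<delta>"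
    and ab: "a < N" "b < N" "(a,b) \<noteq> (r,s)"
  shows "F N (ut k N j (em N r s x)) $$ (a,b) = 0"
proof -
  let ?M = "F N (ut k N j (em N r s x))"
  have sm: "small N \<delta> (em N r s x)" using rs x by (simp add: small_em)
  have cM: "?M \<in> carrier_mat N N" using F_carrier ut_D g sm by auto
  have key: "\<i> * ?M $$ (a,b) = cnj (u a) * ?M $$ (a,b) * u b"
    if u: "\<And>l. l < N \<Longrightarrow> cmod (u l) = 1" and uu: "cnj (u r) * u s = \<i>" for u
  proof -
    have e1: "adj (dg N u) * em N r s x * dg N u = \<i> \<cdot>\<^sub>m em N r s x"
    proof (rule eq_matI)
      fix p q assume pq: "p < dim_row (\<i> \<cdot>\<^sub>m em N r s x)" "q < dim_col (\<i> \<cdot>\<^sub>m em N r s x)"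
      have a1: "cnj (u r) * x * u s = \<i> * x" using uu by (metis mult.assoc mult.commute)
      show "(adj (dg N u) * em N r s x * dg N u) $$ (p,q) = (\<i> \<cdot>\<^sub>m em N r s x) $$ (p,q)"
        using dg_conj_entry[of "em N r s x" N p q u] pq a1 by auto
    qed auto
    have sm2: "small N \<delta> (\<i> \<cdot>\<^sub>m em N r s x)"
      using rs x by (simp add: small_em em_smult[symmetric] norm_mult)
    have "\<i> \<cdot>\<^sub>m ?M = F N (ut k N j (\<i> \<cdot>\<^sub>m em N r s x))"
      using phi_sc[OF g sm sm2] by simp
    also have "\<dots> = adj (dg N u) * ?M * dg N u"
      using phi_conj[OF g sm dg_unitary[of N u]] u e1 by simp
    finally have "(\<i> \<cdot>\<^sub>m ?M) $$ (a,b) = (adj (dg N u) * ?M * dg N u) $$ (a,b)" by simp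
    then show ?thesis using dg_conj_entry[OF cM ab(1,2)] cM ab by simp
  qed
  have k1: "\<i> * ?M $$ (a,b) = cnj (if a = s then \<i> else 1) * ?M $$ (a,b) * (if b = s then \<i> else 1)"
    by (rule key[of "\<lambda>l. if l = s then \<i> else 1"]) (use rs in auto)
  have k2: "\<i> * ?M $$ (a,b) = cnj (if a = r then - \<i> else 1) * ?M $$ (a,b) * (if b = r then - \<i> else 1)"
    by (rule key[of "\<lambda>l. if l = r then - \<i> else 1"]) (use rs in auto)
  show ?thesis
  proof (cases "b = s")
    case False
    show ?thesis
    proof (cases "a = s")
      case True
      then have "\<i> * ?M $$ (a,b) = (- \<i>) * ?M $$ (a,b)" using k1 False by simp
      then show ?thesis using zero_of_ne ii_neq by blast
    next
      case False2: False
      then have "\<i> * ?M $$ (a,b) = 1 * ?M $$ (a,b)" using k1 False by simp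
      then show ?thesis using zero_of_ne ii_neq by blast
    qed
  next
    case True
    then have ar: "a \<noteq> r" using ab by auto
    have "b \<noteq> r" using True rs by auto
    then have "\<i> * ?M $$ (a,b) = 1 * ?M $$ (a,b)" using k2 ar by simp
    then show ?thesis using zero_of_ne ii_neq by blast
  qed
qed

lemma diag_diag:
  assumes g: "goodeps N \<delta>" "N \<ge> 1" and r: "r < N" and x: "cmod x < \<delta>"
    and ab: "a < N" "b < N" "a \<noteq> b"
  shows "F N (ut k N j (em N r r x)) $$ (a,b) = 0"
proof -
  let ?M = "F N (ut k N j (em N r r x))"
  let ?u = "\<lambda>l. if l = b then \<i> else (1::complex)"
  have sm: "small N \<delta> (em N r r x)" using r x by (simp add: small_em)
  have cM: "?M \<in> carrier_mat N N" using F_carrier ut_D g sm by auto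
  have u: "\<And>l. l < N \<Longrightarrow> cmod (?u l) = 1" by auto
  have uu: "cnj (?u r) * ?u r = 1" by auto
  have e1: "adj (dg N ?u) * em N r r x * dg N ?u = em N r r x"
  proof (rule eq_matI)
    fix p q assume pq: "p < dim_row (em N r r x)" "q < dim_col (em N r r x)"
    have a1: "cnj (?u r) * x * ?u r = x" using uu by (metis mult.assoc mult.commute mult_1)
    show "(adj (dg N ?u) * em N r r x * dg N ?u) $$ (p,q) = em N r r x $$ (p,q)"
      using dg_conj_entry[of "em N r r x" N p q ?u] pq a1 by auto
  qed auto
  have "?M = adj (dg N ?u) * ?M * dg N ?u"
    using phi_conj[OF g sm dg_unitary[of N ?u]] u e1 by simp
  then have "?M $$ (a,b) = (adj (dg N ?u) * ?M * dg N ?u) $$ (a,b)" by simp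
  then have "?M $$ (a,b) = cnj (?u a) * ?M $$ (a,b) * ?u b" using dg_conj_entry[OF cM ab(1,2)] by simp
  then have "1 * ?M $$ (a,b) = \<i> * ?M $$ (a,b)" using ab by (simp add: mult.commute)
  then show ?thesis using zero_of_ne ii_neq by (metis)
qed

end



definition PP :: "nat \<Rightarrow> nat \<Rightarrow> nat \<Rightarrow> complex \<Rightarrow> complex mat" where
  "PP N r s y = em N r r y + em N r s (-y) + em N s r (-y) + em N s s y"

lemma PP_carrier[simp]: "PP N r s y \<in> carrier_mat N N" by (simp add: PP_def)
lemma PP_dims[simp]: "dim_row (PP N r s y) = N" "dim_col (PP N r s y) = N" by (auto simp: PP_def)

lemma PP_index: "r \<noteq> s \<Longrightarrow> a < N \<Longrightarrow> b < N \<Longrightarrow> PP N r s y $$ (a,b) =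
   (if a = r \<and> b = r then y else if a = r \<and> b = s then -y else if a = s \<and> b = r then -y else if a = s \<and> b = s then y else 0)"
  by (auto simp: PP_def)

lemma rot_em_ss:
  assumes "r \<noteq> s" "r < N" "s < N"
  shows "adj (rot N r s) * em N s s (2 * y) * rot N r s = PP N r s y"
proof (rule eq_matI)
  fix a b assume ab: "a < dim_row (PP N r s y)" "b < dim_col (PP N r s y)"
  have e: "(adj (rot N r s) * em N s s (2 * y) * rot N r s) $$ (a,b) = rote r s s a * (2 * y) * rote r s s b"
    using conj_em[of "rot N r s" N a b s s "2*y"] ab assms by simp
  have h2: "hh * (2 * y) * hh = y" "- hh * (2 * y) * hh = -y" "hh * (2 * y) * - hh = -y" "- hh * (2 * y) * - hh = y"
    using hh_sq by (simp_all add: algebra_simps)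
  have "a = r \<or> a = s \<or> a \<notin> {r,s}" "b = r \<or> b = s \<or> b \<notin> {r,s}" by auto
  then show "(adj (rot N r s) * em N s s (2 * y) * rot N r s) $$ (a,b) = PP N r s y $$ (a,b)"
    unfolding e using ab assms h2 by (elim disjE) (simp_all add: PP_index rote_vals)
qed auto

lemma small_sum1: "r \<noteq> s \<Longrightarrow> r < N \<Longrightarrow> s < N \<Longrightarrow> cmod y < \<delta> \<Longrightarrow> small N \<delta> (em N r r y + em N r s (-y))"
  unfolding small_def by (auto split: if_splits intro: le_less_trans[OF norm_ge_zero])
lemma small_sum2: "r \<noteq> s \<Longrightarrow> r < N \<Longrightarrow> s < N \<Longrightarrow> cmod y < \<delta> \<Longrightarrow> small N \<delta> (em N r r y + em N r s (-y) + em N s r (-y))"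
  unfolding small_def by (auto split: if_splits intro: le_less_trans[OF norm_ge_zero])
lemma small_sum3: "r \<noteq> s \<Longrightarrow> r < N \<Longrightarrow> s < N \<Longrightarrow> cmod y < \<delta> \<Longrightarrow> small N \<delta> (PP N r s y)"
  unfolding small_def PP_def by (auto split: if_splits intro: le_less_trans[OF norm_ge_zero])

context FF begin

lemma rot_step_half:
  assumes g: "goodeps N \<delta>" "N \<ge> 1" and rs: "r \<noteq> s" "r < N" "s < N"
    and H: "\<And>x. cmod x < \<delta> \<Longrightarrow> F N (ut k N j (em N s s x)) = em N s s (c * x)"
    and y: "cmod y < \<delta> / 2"
  shows "F N (ut k N j (em N r r y)) = em N r r (c * y)"
    "F N (ut k N j (em N r s (-y))) = em N r s (c * (-y))"
    "F N (ut k N j (em N s r (-y))) = em N s r (c * (-y))"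
proof -
  have y1: "cmod y < \<delta>" using y norm_ge_zero[of y] by linarith
  have y2: "cmod (2 * y) < \<delta>" using y by (simp add: norm_mult)
  have y3: "cmod (-y) < \<delta>" using y1 by simp
  let ?R = "rot N r s"
  let ?A = "F N (ut k N j (em N r r y))"
  let ?B = "F N (ut k N j (em N r s (-y)))"
  let ?C = "F N (ut k N j (em N s r (-y)))"
  have cA: "?A \<in> carrier_mat N N" "?B \<in> carrier_mat N N" "?C \<in> carrier_mat N N"
    using F_carrier ut_D g rs y1 y3 by (auto simp: small_em)
  have "F N (ut k N j (PP N r s y)) = adj ?R * F N (ut k N j (em N s s (2*y))) * ?R"
    using phi_conj[OF g, of "em N s s (2*y)" ?R] rot_em_ss[OF rs] rs y2 rot_unitary[OF rs] by (simp add: small_em)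
  also have "\<dots> = PP N r s (c * y)"
    using H[OF y2] rot_em_ss[OF rs, of "c*y"] by (simp add: mult.left_commute)
  finally have e1: "F N (ut k N j (PP N r s y)) = PP N r s (c * y)" .
  have "F N (ut k N j (PP N r s y)) = F N (ut k N j (em N r r y + em N r s (-y) + em N s r (-y))) + F N (ut k N j (em N s s y))"
    unfolding PP_def by (rule phi_add[OF g]) (use small_sum2[OF rs y1] small_sum3[OF rs y1] rs y1 in \<open>auto simp: small_em PP_def\<close>)
  also have "F N (ut k N j (em N r r y + em N r s (-y) + em N s r (-y))) = F N (ut k N j (em N r r y + em N r s (-y))) + ?C"
    by (rule phi_add[OF g]) (use small_sum1[OF rs y1] small_sum2[OF rs y1] rs y3 in \<open>auto simp: small_em\<close>)
  also have "F N (ut k N j (em N r r y + em N r s (-y))) = ?A + ?B"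
    by (rule phi_add[OF g]) (use small_sum1[OF rs y1] rs y1 y3 in \<open>auto simp: small_em\<close>)
  finally have e2: "?A + ?B + ?C + em N s s (c * y) = PP N r s (c * y)" using e1 H[OF y1] by simp
  have ent: "?A $$ (a,b) + ?B $$ (a,b) + ?C $$ (a,b) + em N s s (c*y) $$ (a,b) = PP N r s (c*y) $$ (a,b)"
    if "a < N" "b < N" for a b
  proof -
    have "(?A + ?B + ?C + em N s s (c * y)) $$ (a,b) = PP N r s (c*y) $$ (a,b)" using e2 by simp
    then show ?thesis using that cA by (simp del: em_index add: add.assoc)
  qed
  have zA: "?A $$ (a,b) = 0" if "a < N" "b < N" "a \<noteq> b" for a b
    by (rule diag_diag[OF g rs(2) y1 that])
  have zB: "?B $$ (a,b) = 0" if "a < N" "b < N" "(a,b) \<noteq> (r,s)" for a b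
    by (rule diag_off[OF g rs y3 that])
  have zC: "?C $$ (a,b) = 0" if "a < N" "b < N" "(a,b) \<noteq> (s,r)" for a b
    by (rule diag_off[OF g rs(1)[symmetric] rs(3,2) y3 that])
  show "?A = em N r r (c * y)"
  proof (rule eq_matI)
    fix a b assume ab: "a < dim_row (em N r r (c * y))" "b < dim_col (em N r r (c * y))"
    show "?A $$ (a,b) = em N r r (c * y) $$ (a,b)"
    proof (cases "a = b")
      case True
      then show ?thesis using ent[of a b] zB[of a b] zC[of a b] ab rs by (auto simp: PP_index)
    qed (use zA ab in auto)
  qed (use cA in auto)
  show "?B = em N r s (c * (-y))"
  proof (rule eq_matI)
    fix a b assume ab: "a < dim_row (em N r s (c * (-y)))" "b < dim_col (em N r s (c * (-y)))"
    show "?B $$ (a,b) = em N r s (c * (-y)) $$ (a,b)"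
    proof (cases "(a,b) = (r,s)")
      case True
      then show ?thesis using ent[of a b] zA[of a b] zC[of a b] ab rs by (auto simp: PP_index)
    qed (use zB ab in auto)
  qed (use cA in auto)
  show "?C = em N s r (c * (-y))"
  proof (rule eq_matI)
    fix a b assume ab: "a < dim_row (em N s r (c * (-y)))" "b < dim_col (em N s r (c * (-y)))"
    show "?C $$ (a,b) = em N s r (c * (-y)) $$ (a,b)"
    proof (cases "(a,b) = (s,r)")
      case True
      then show ?thesis using ent[of a b] zA[of a b] zB[of a b] ab rs by (auto simp: PP_index)
    qed (use zC ab in auto)
  qed (use cA in auto)
qed

end



context FF begin

lemma scale_em:
  assumes g: "goodeps N \<delta>" "N \<ge> 1" and rs: "r < N" "s < N" and x: "cmod x < \<delta>"
    and h: "F N (ut k N j (em N r s (x/2))) = em N r s (c * (x/2))"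
  shows "F N (ut k N j (em N r s x)) = em N r s (c * x)"
proof -
  have "cmod (x/2) = cmod x / 2" by (simp add: norm_divide)
  then have x2: "cmod (x/2) < \<delta>" using x norm_ge_zero[of x] by linarith
  have e: "em N r s x = 2 \<cdot>\<^sub>m em N r s (x/2)" using em_smult[of N r s 2 "x/2"] by simp
  have "F N (ut k N j (2 \<cdot>\<^sub>m em N r s (x/2))) = 2 \<cdot>\<^sub>m F N (ut k N j (em N r s (x/2)))"
    by (rule phi_sc[OF g]) (use rs x x2 in \<open>simp_all add: e[symmetric] small_em\<close>)
  then show ?thesis using e h em_smult[of N r s 2 "c * (x/2)"] by simp
qed

lemma rot_step:
  assumes g: "goodeps N \<delta>" "N \<ge> 1" and rs: "r \<noteq> s" "r < N" "s < N"
    and H: "\<And>x. cmod x < \<delta> \<Longrightarrow> F N (ut k N j (em N s s x)) = em N s s (c * x)"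
    and x: "cmod x < \<delta>"
  shows "F N (ut k N j (em N r r x)) = em N r r (c * x)"
    "F N (ut k N j (em N r s x)) = em N r s (c * x)"
    "F N (ut k N j (em N s r x)) = em N s r (c * x)"
proof -
  have x2: "cmod (x/2) < \<delta>/2" "cmod (-(x/2)) < \<delta>/2" using x by (simp_all add: norm_divide)
  note R1 = rot_step_half[OF g rs H x2(1)]
  note R2 = rot_step_half[OF g rs H x2(2)]
  show "F N (ut k N j (em N r r x)) = em N r r (c * x)"
    by (rule scale_em[OF g rs(2) rs(2) x R1(1)])
  show "F N (ut k N j (em N r s x)) = em N r s (c * x)"
    by (rule scale_em[OF g rs(2) rs(3) x]) (use R2(2) in simp)
  show "F N (ut k N j (em N s r x)) = em N s r (c * x)"
    by (rule scale_em[OF g rs(3) rs(2) x]) (use R2(3) in simp)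
qed

lemma all_entries:
  assumes g: "goodeps N \<delta>" "N \<ge> 1" and s0: "s0 < N"
    and H: "\<And>x. cmod x < \<delta> \<Longrightarrow> F N (ut k N j (em N s0 s0 x)) = em N s0 s0 (c * x)"
    and rs: "r < N" "s < N" and x: "cmod x < \<delta>"
  shows "F N (ut k N j (em N r s x)) = em N r s (c * x)"
proof -
  have Hd: "F N (ut k N j (em N q q z)) = em N q q (c * z)" if "q < N" "cmod z < \<delta>" for q z
  proof (cases "q = s0")
    case True then show ?thesis using H that by simp
  next
    case nq: False
    have H': "\<And>x. cmod x < \<delta> \<Longrightarrow> F N (ut k N j (em N s0 s0 x)) = em N s0 s0 (c * x)" by (rule H)
    show ?thesis using rot_step(1)[OF g nq that(1) s0 H' that(2)] .
  qed
  show ?thesis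
  proof (cases "r = s")
    case True then show ?thesis using Hd rs x by simp
  next
    case nrs: False
    have H': "\<And>z. cmod z < \<delta> \<Longrightarrow> F N (ut k N j (em N s s z)) = em N s s (c * z)" using Hd rs by blast
    show ?thesis using rot_step(2)[OF g nrs rs H' x] .
  qed
qed

end



definition msk :: "nat \<Rightarrow> nat \<Rightarrow> (nat \<times> nat \<times> nat) set \<Rightarrow> complex mat list \<Rightarrow> complex mat list" where
  "msk k N A Y = map (\<lambda>i. mat N N (\<lambda>(a,b). if (i,a,b) \<in> A then Y ! i $$ (a,b) else 0)) [0..<k]"

lemma mask_length[simp]: "length (msk k N A Y) = k" by (simp add: msk_def)
lemma mask_nth[simp]: "i < k \<Longrightarrow> msk k N A Y ! i = mat N N (\<lambda>(a,b). if (i,a,b) \<in> A then Y ! i $$ (a,b) else 0)"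
proof -
  assume i: "i < k"
  have h: "[0..<k] ! i = i" using i by simp
  have e: "msk k N A Y ! i = (\<lambda>i. mat N N (\<lambda>(a,b). if (i,a,b) \<in> A then Y ! i $$ (a,b) else 0)) ([0..<k] ! i)"
    unfolding msk_def by (rule nth_map) (use i in simp)
  show ?thesis using e unfolding h by simp
qed

lemma tuples_nth: "Y \<in> tuples k N \<Longrightarrow> i < k \<Longrightarrow> Y ! i \<in> carrier_mat N N" by (simp add: tuples_def)
lemma tuples_len: "Y \<in> tuples k N \<Longrightarrow> length Y = k" by (simp add: tuples_def)

lemma lin_comb_nth: "length X = k \<Longrightarrow> length Y = k \<Longrightarrow> i < k \<Longrightarrow> lin_comb_tuple \<alpha> X \<beta> Y ! i = \<alpha> \<cdot>\<^sub>m X ! i + \<beta> \<cdot>\<^sub>m Y ! i"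
  by (simp add: lin_comb_tuple_def)
lemma lin_comb_len: "length X = k \<Longrightarrow> length Y = k \<Longrightarrow> length (lin_comb_tuple \<alpha> X \<beta> Y) = k"
  by (simp add: lin_comb_tuple_def)
lemma dsum_tuple_nth: "length X = k \<Longrightarrow> length Y = k \<Longrightarrow> i < k \<Longrightarrow> dsum_tuple X Y ! i = dsum (X ! i) (Y ! i)"
  by (simp add: dsum_tuple_def)

context FF begin

lemma tuple_D:
  assumes "goodeps N \<delta>" "Y \<in> tuples k N" "\<And>i a b. i < k \<Longrightarrow> a < N \<Longrightarrow> b < N \<Longrightarrow> cmod (Y ! i $$ (a,b)) < \<delta>"
  shows "Y \<in> D N"
  using assms unfolding goodeps_def by blast

lemma F_zero:
  assumes g: "goodeps N \<delta>" "N \<ge> 1"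
  shows "F N (map (\<lambda>i. 0\<^sub>m N N) [0..<k]) = 0\<^sub>m N N"
proof -
  let ?Z = "map (\<lambda>i. 0\<^sub>m N N) [0..<k]"
  have Z: "?Z \<in> D N" by (rule tuple_D[OF g(1)]) (use g in \<open>auto simp: tuples_def goodeps_def\<close>)
  have l: "lin_comb_tuple 0 ?Z 0 ?Z = ?Z" unfolding lin_comb_tuple_def map2_map_upt by simp
  have c: "F N ?Z \<in> carrier_mat N N" using F_carrier Z g by auto
  have "F N ?Z = 0 \<cdot>\<^sub>m F N ?Z + 0 \<cdot>\<^sub>m F N ?Z" using F_lin[OF g(2) Z Z, of 0 0] l Z by simp
  also have "\<dots> = 0\<^sub>m N N" using c by (intro eq_matI) auto
  finally show ?thesis .
qed

lemma mask_D:
  assumes g: "goodeps N \<delta>" and Y: "Y \<in> tuples k N" and sm: "\<And>i a b. i < k \<Longrightarrow> a < N \<Longrightarrow> b < N \<Longrightarrow> cmod (Y ! i $$ (a,b)) < \<delta>"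
  shows "msk k N A Y \<in> D N"
proof (rule tuple_D[OF g])
  show "msk k N A Y \<in> tuples k N" by (auto simp: tuples_def)
  have "\<delta> > 0" using g by (simp add: goodeps_def)
  then show "\<And>i a b. i < k \<Longrightarrow> a < N \<Longrightarrow> b < N \<Longrightarrow> cmod (msk k N A Y ! i $$ (a,b)) < \<delta>"
    using sm by auto
qed

lemma mask_decomp:
  assumes g: "goodeps N \<delta>" "N \<ge> 1"
    and Hall: "\<And>j r s x. j < k \<Longrightarrow> r < N \<Longrightarrow> s < N \<Longrightarrow> cmod x < \<delta> \<Longrightarrow> F N (ut k N j (em N r s x)) = em N r s (c j * x)"
    and Y: "Y \<in> tuples k N" and sm: "\<And>i a b. i < k \<Longrightarrow> a < N \<Longrightarrow> b < N \<Longrightarrow> cmod (Y ! i $$ (a,b)) < \<delta>"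
    and A: "finite A" "A \<subseteq> {..<k} \<times> {..<N} \<times> {..<N}"
  shows "F N (msk k N A Y) = mat N N (\<lambda>(a,b). \<Sum>j<k. c j * (if (j,a,b) \<in> A then Y ! j $$ (a,b) else 0))"
  using A
proof (induction A rule: finite_induct)
  case empty
  have "msk k N {} Y = map (\<lambda>i. 0\<^sub>m N N) [0..<k]" unfolding msk_def
    by (intro map_cong refl eq_matI) auto
  then show ?case using F_zero[OF g] by (auto intro!: eq_matI)
next
  case (insert p A)
  obtain j0 r0 s0 where p: "p = (j0,r0,s0)" by (cases p) auto
  have pr: "j0 < k" "r0 < N" "s0 < N" using insert p by auto
  have IH: "F N (msk k N A Y) = mat N N (\<lambda>(a,b). \<Sum>j<k. c j * (if (j,a,b) \<in> A then Y ! j $$ (a,b) else 0))"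
    using insert by auto
  have m1: "msk k N {p} Y = ut k N j0 (em N r0 s0 (Y ! j0 $$ (r0,s0)))"
    unfolding p by (rule nth_equalityI) (auto intro!: eq_matI)
  have m2: "msk k N (insert p A) Y = lin_comb_tuple 1 (msk k N A Y) 1 (msk k N {p} Y)"
    by (rule nth_equalityI) (use insert in \<open>auto simp: lin_comb_nth lin_comb_len intro!: eq_matI\<close>)
  have D1: "msk k N A Y \<in> D N" "msk k N {p} Y \<in> D N" "msk k N (insert p A) Y \<in> D N"
    using mask_D[OF g(1) Y sm] by auto
  have Fp: "F N (msk k N {p} Y) = em N r0 s0 (c j0 * Y ! j0 $$ (r0,s0))"
    unfolding m1 using Hall[OF pr] sm[OF pr] by simp
  have "F N (msk k N (insert p A) Y) = 1 \<cdot>\<^sub>m F N (msk k N A Y) + 1 \<cdot>\<^sub>m F N (msk k N {p} Y)"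
    using F_lin[OF g(2) D1(1,2), of 1 1] D1(3) m2 by simp
  also have "\<dots> = mat N N (\<lambda>(a,b). \<Sum>j<k. c j * (if (j,a,b) \<in> insert p A then Y ! j $$ (a,b) else 0))"
  proof (rule eq_matI)
    fix a b assume ab: "a < dim_row (mat N N (\<lambda>(a,b). \<Sum>j<k. c j * (if (j,a,b) \<in> insert p A then Y ! j $$ (a,b) else 0)))"
      "b < dim_col (mat N N (\<lambda>(a,b). \<Sum>j<k. c j * (if (j,a,b) \<in> insert p A then Y ! j $$ (a,b) else 0)))"
    then have ab': "a < N" "b < N" by auto
    have "(\<Sum>j<k. c j * (if (j,a,b) \<in> insert p A then Y ! j $$ (a,b) else 0)) =
          (\<Sum>j<k. c j * (if (j,a,b) \<in> A then Y ! j $$ (a,b) else 0) + (if a = r0 \<and> b = s0 then (if j = j0 then c j0 * Y ! j0 $$ (r0,s0) else 0) else 0))"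
      by (rule sum.cong) (use insert p in auto)
    also have "\<dots> = (\<Sum>j<k. c j * (if (j,a,b) \<in> A then Y ! j $$ (a,b) else 0)) + (if a = r0 \<and> b = s0 then c j0 * Y ! j0 $$ (r0,s0) else 0)"
      using pr by (cases "a = r0 \<and> b = s0") (auto simp add: sum.distrib)
    finally show "(1 \<cdot>\<^sub>m F N (msk k N A Y) + 1 \<cdot>\<^sub>m F N (msk k N {p} Y)) $$ (a,b) =
       mat N N (\<lambda>(a,b). \<Sum>j<k. c j * (if (j,a,b) \<in> insert p A then Y ! j $$ (a,b) else 0)) $$ (a,b)"
      using ab' IH Fp by simp
  qed (auto simp: Fp)
  finally show ?case .
qed

lemma small_formula:
  assumes g: "goodeps N \<delta>" "N \<ge> 1"
    and Hall: "\<And>j r s x. j < k \<Longrightarrow> r < N \<Longrightarrow> s < N \<Longrightarrow> cmod x < \<delta> \<Longrightarrow> F N (ut k N j (em N r s x)) = em N r s (c j * x)"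
    and Y: "Y \<in> tuples k N" and sm: "\<And>i a b. i < k \<Longrightarrow> a < N \<Longrightarrow> b < N \<Longrightarrow> cmod (Y ! i $$ (a,b)) < \<delta>"
  shows "F N Y = mat N N (\<lambda>(a,b). \<Sum>j<k. c j * Y ! j $$ (a,b))"
proof -
  let ?A = "{..<k} \<times> {..<N} \<times> {..<N}"
  have "msk k N ?A Y = Y"
  proof (rule nth_equalityI)
    show "length (msk k N ?A Y) = length Y" using Y by (simp add: tuples_len)
    fix i assume "i < length (msk k N ?A Y)"
    then have i: "i < k" by simp
    show "msk k N ?A Y ! i = Y ! i" by (rule eq_matI) (use tuples_nth[OF Y i] i in auto)
  qed
  moreover have "F N (msk k N ?A Y) = mat N N (\<lambda>(a,b). \<Sum>j<k. c j * (if (j,a,b) \<in> ?A then Y ! j $$ (a,b) else 0))"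
    by (rule mask_decomp[OF g Hall Y sm]) auto
  moreover have "mat N N (\<lambda>(a,b). \<Sum>j<k. c j * (if (j,a,b) \<in> ?A then Y ! j $$ (a,b) else 0)) = mat N N (\<lambda>(a,b). \<Sum>j<k. c j * Y ! j $$ (a,b))"
    by (rule eq_matI) auto
  ultimately show ?thesis by simp
qed

end



context FF begin

lemma scale_formula:
  assumes g: "goodeps N \<delta>" "N \<ge> 1"
    and Hall: "\<And>j r s x. j < k \<Longrightarrow> r < N \<Longrightarrow> s < N \<Longrightarrow> cmod x < \<delta> \<Longrightarrow> F N (ut k N j (em N r s x)) = em N r s (c j * x)"
    and YD: "Y \<in> D N"
  shows "F N Y = mat N N (\<lambda>(a,b). \<Sum>j<k. c j * Y ! j $$ (a,b))"
proof -
  have Y: "Y \<in> tuples k N" using D_tuples g YD by auto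
  have dpos: "\<delta> > 0" using g by (simp add: goodeps_def)
  define B where "B = (\<Sum>i<k. \<Sum>a<N. \<Sum>b<N. cmod (Y ! i $$ (a,b)))"
  have B0: "B \<ge> 0" unfolding B_def by (intro sum_nonneg) auto
  have Bb: "cmod (Y ! i $$ (a,b)) \<le> B" if "i < k" "a < N" "b < N" for i a b
  proof -
    have "cmod (Y ! i $$ (a,b)) \<le> (\<Sum>b<N. cmod (Y ! i $$ (a,b)))"
      by (rule member_le_sum) (use that in auto)
    also have "\<dots> \<le> (\<Sum>a<N. \<Sum>b<N. cmod (Y ! i $$ (a,b)))"
      by (rule member_le_sum[of a "{..<N}" "\<lambda>a. \<Sum>b<N. cmod (Y ! i $$ (a,b))"]) (use that in \<open>auto intro: sum_nonneg\<close>)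
    also have "\<dots> \<le> B" unfolding B_def
      by (rule member_le_sum[of i "{..<k}" "\<lambda>i. \<Sum>a<N. \<Sum>b<N. cmod (Y ! i $$ (a,b))"]) (use that in \<open>auto intro!: sum_nonneg\<close>)
    finally show ?thesis .
  qed
  define \<eta> :: real where "\<eta> = \<delta> / (B + 1)"
  have eta0: "\<eta> > 0" unfolding \<eta>_def using dpos B0 by simp
  have etaB: "\<eta> * B < \<delta>"
  proof -
    have "\<eta> * B = \<delta> * (B / (B + 1))" unfolding \<eta>_def by simp
    also have "\<dots> < \<delta> * 1" using dpos B0 by (intro mult_strict_left_mono) auto
    finally show ?thesis by simp
  qed
  let ?Z = "lin_comb_tuple (complex_of_real \<eta>) Y 0 Y"
  have lenY: "length Y = k" using Y by (simp add: tuples_len)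
  have Zn: "?Z ! i = complex_of_real \<eta> \<cdot>\<^sub>m Y ! i + 0 \<cdot>\<^sub>m Y ! i" if "i < k" for i
    using lin_comb_nth[OF lenY lenY that] .
  have Zent: "?Z ! i $$ (a,b) = complex_of_real \<eta> * Y ! i $$ (a,b)" if "i < k" "a < N" "b < N" for i a b
    using Zn[OF that(1)] tuples_nth[OF Y that(1)] that by simp
  have Zt: "?Z \<in> tuples k N"
    unfolding tuples_def using lin_comb_len[OF lenY lenY] Zn tuples_nth[OF Y] by auto
  have Zs: "cmod (?Z ! i $$ (a,b)) < \<delta>" if "i < k" "a < N" "b < N" for i a b
  proof -
    have "cmod (?Z ! i $$ (a,b)) = \<eta> * cmod (Y ! i $$ (a,b))" using Zent[OF that] eta0 by (simp add: norm_mult)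
    also have "\<dots> \<le> \<eta> * B" using Bb[OF that] eta0 by (intro mult_left_mono) auto
    finally show ?thesis using etaB by simp
  qed
  have ZD: "?Z \<in> D N" by (rule tuple_D[OF g(1) Zt Zs])
  have cFY: "F N Y \<in> carrier_mat N N" using F_carrier g YD by auto
  have e1: "F N ?Z = complex_of_real \<eta> \<cdot>\<^sub>m F N Y + 0 \<cdot>\<^sub>m F N Y" using F_lin[OF g(2) YD YD ZD] .
  have e2: "F N ?Z = mat N N (\<lambda>(a,b). \<Sum>j<k. c j * ?Z ! j $$ (a,b))"
    by (rule small_formula[OF g Hall Zt Zs])
  show ?thesis
  proof (rule eq_matI)
    fix a b assume ab: "a < dim_row (mat N N (\<lambda>(a,b). \<Sum>j<k. c j * Y ! j $$ (a,b)))"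
      "b < dim_col (mat N N (\<lambda>(a,b). \<Sum>j<k. c j * Y ! j $$ (a,b)))"
    then have ab': "a < N" "b < N" by auto
    have "complex_of_real \<eta> * F N Y $$ (a,b) = F N ?Z $$ (a,b)" using e1 cFY ab' by simp
    also have "\<dots> = (\<Sum>j<k. c j * ?Z ! j $$ (a,b))" using e2 ab' by simp
    also have "\<dots> = (\<Sum>j<k. complex_of_real \<eta> * (c j * Y ! j $$ (a,b)))"
      by (rule sum.cong) (use Zent ab' in auto)
    also have "\<dots> = complex_of_real \<eta> * (\<Sum>j<k. c j * Y ! j $$ (a,b))" by (simp add: sum_distrib_left)
    finally have "F N Y $$ (a,b) = (\<Sum>j<k. c j * Y ! j $$ (a,b))" using eta0 by simp
    then show "F N Y $$ (a,b) = mat N N (\<lambda>(a,b). \<Sum>j<k. c j * Y ! j $$ (a,b)) $$ (a,b)" using ab' by simp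
  qed (use cFY in auto)
qed

lemma Fall:
  assumes n: "n \<ge> 1" and e1: "goodeps 1 \<epsilon>1"
    and H1: "\<And>j x. j < k \<Longrightarrow> cmod x < \<epsilon>1 \<Longrightarrow> F 1 (ut k 1 j (mat 1 1 (\<lambda>_. x))) = mat 1 1 (\<lambda>_. c j * x)"
    and X: "X \<in> D n"
  shows "F n X = mat n n (\<lambda>(r,s). \<Sum>j<k. c j * (X ! j $$ (r,s)))"
proof -
  define N where "N = n + 1"
  have N1: "N \<ge> 1" "n < N" unfolding N_def by auto
  obtain eN where eN: "goodeps N eN" using goodeps_ex N1 by blast
  obtain en where en: "goodeps n en" using goodeps_ex n by blast
  define \<delta> where "\<delta> = min eN \<epsilon>1"
  have g: "goodeps N \<delta>" unfolding \<delta>_def by (rule goodeps_mono[OF eN]) (use eN e1 in \<open>auto simp: goodeps_def\<close>)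
  have dle: "\<delta> \<le> \<epsilon>1" unfolding \<delta>_def by simp
  have zero_n: "ut k n j (0\<^sub>m n n) = map (\<lambda>i. 0\<^sub>m n n) [0..<k]" for j
    unfolding ut_def by simp
  have H: "F N (ut k N j (em N n n x)) = em N n n (c j * x)" if j: "j < k" and x: "cmod x < \<delta>" for j x
  proof -
    have d: "dsum (0\<^sub>m n n) (mat 1 1 (\<lambda>_. y)) = em N n n y" for y
      unfolding N_def by (rule eq_matI) (auto simp: dsum_def)
    have u: "ut k N j (em N n n x) = dsum_tuple (ut k n j (0\<^sub>m n n)) (ut k 1 j (mat 1 1 (\<lambda>_. x)))"
      using dsum_ut[of "0\<^sub>m n n" n "mat 1 1 (\<lambda>_. x)" 1 k j] d unfolding N_def by simp
    have D0: "ut k n j (0\<^sub>m n n) \<in> D n"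
      by (rule ut_D[OF en]) (use en in \<open>auto simp: small_def goodeps_def\<close>)
    have x1: "cmod x < \<epsilon>1" using x dle by simp
    have D1: "ut k 1 j (mat 1 1 (\<lambda>_. x)) \<in> D 1"
      by (rule ut_D[OF e1]) (use x1 in \<open>auto simp: small_def\<close>)
    have "F N (ut k N j (em N n n x)) = F (n+1) (dsum_tuple (ut k n j (0\<^sub>m n n)) (ut k 1 j (mat 1 1 (\<lambda>_. x))))"
      using u N_def by simp
    also have "\<dots> = dsum (F n (ut k n j (0\<^sub>m n n))) (F 1 (ut k 1 j (mat 1 1 (\<lambda>_. x))))"
      by (rule F_dsum[OF n _ D0 D1]) simp
    also have "\<dots> = dsum (0\<^sub>m n n) (mat 1 1 (\<lambda>_. c j * x))"
      using F_zero[OF en n] zero_n H1[OF j x1] by simp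
    finally show ?thesis using d by simp
  qed
  have Hall: "F N (ut k N j (em N r s x)) = em N r s (c j * x)"
    if "j < k" "r < N" "s < N" "cmod x < \<delta>" for j r s x
    by (rule all_entries[OF g N1(1) N1(2) _ that(2,3,4)]) (use H that(1) in blast)
  let ?Z = "map (\<lambda>i. 0\<^sub>m 1 1) [0..<k]"
  obtain e1' where "goodeps 1 e1'" using e1 by blast
  have Z1: "?Z \<in> D 1" by (rule tuple_D[OF e1]) (use e1 in \<open>auto simp: tuples_def goodeps_def\<close>)
  have XZ: "dsum_tuple X ?Z \<in> D N" unfolding N_def by (rule D_dsum[OF n _ X Z1]) simp
  have Xt: "X \<in> tuples k n" using D_tuples n X by auto
  have lenX: "length X = k" using Xt by (simp add: tuples_len)
  have F1: "F N (dsum_tuple X ?Z) = dsum (F n X) (0\<^sub>m 1 1)"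
    unfolding N_def using F_dsum[OF n _ X Z1] F_zero[OF e1] by simp
  have F2: "F N (dsum_tuple X ?Z) = mat N N (\<lambda>(a,b). \<Sum>j<k. c j * (dsum_tuple X ?Z) ! j $$ (a,b))"
    by (rule scale_formula[OF g N1(1) Hall XZ])
  have cX: "F n X \<in> carrier_mat n n" using F_carrier n X by auto
  show ?thesis
  proof (rule eq_matI)
    fix a b assume ab: "a < dim_row (mat n n (\<lambda>(r,s). \<Sum>j<k. c j * (X ! j $$ (r,s))))"
      "b < dim_col (mat n n (\<lambda>(r,s). \<Sum>j<k. c j * (X ! j $$ (r,s))))"
    then have ab': "a < n" "b < n" by auto
    have "F n X $$ (a,b) = dsum (F n X) (0\<^sub>m 1 1) $$ (a,b)" using cX ab' by (simp add: dsum_def)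
    also have "\<dots> = (\<Sum>j<k. c j * (dsum_tuple X ?Z) ! j $$ (a,b))" using F1 F2 ab' N1 by simp
    also have "\<dots> = (\<Sum>j<k. c j * (X ! j $$ (a,b)))"
    proof (rule sum.cong[OF refl])
      fix j assume j: "j \<in> {..<k}"
      have cj: "X ! j \<in> carrier_mat n n" using tuples_nth[OF Xt] j by auto
      have "dsum_tuple X ?Z ! j = dsum (X ! j) (0\<^sub>m 1 1)" using dsum_tuple_nth[OF lenX _, of ?Z j] j by simp
      then show "c j * (dsum_tuple X ?Z) ! j $$ (a,b) = c j * (X ! j $$ (a,b))" using cj ab' by (simp add: dsum_def)
    qed
    finally show "F n X $$ (a,b) = mat n n (\<lambda>(r,s). \<Sum>j<k. c j * (X ! j $$ (r,s))) $$ (a,b)" using ab' by simp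
  qed (use cX in auto)
qed

lemma main: "\<exists>a :: nat \<Rightarrow> complex. \<forall>n\<ge>1. \<forall>X\<in>D n. F n X = mat n n (\<lambda>(r,c). \<Sum>j<k. a j * (X ! j $$ (r,c)))"
proof -
  obtain e1 where e1: "goodeps 1 e1" using goodeps_ex by blast
  have e1p: "e1 > 0" using e1 by (simp add: goodeps_def)
  define t0 :: complex where "t0 = complex_of_real (e1 / 2)"
  have t0n: "cmod t0 < e1" "t0 \<noteq> 0" unfolding t0_def using e1p by auto
  define c where "c j = F 1 (ut k 1 j (mat 1 1 (\<lambda>_. t0))) $$ (0,0) / t0" for j
  have H1: "F 1 (ut k 1 j (mat 1 1 (\<lambda>_. x))) = mat 1 1 (\<lambda>_. c j * x)" if j: "j < k" and x: "cmod x < e1" for j x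
  proof -
    have em1: "mat 1 1 (\<lambda>_. x) = (x / t0) \<cdot>\<^sub>m mat 1 1 (\<lambda>_. t0)" using t0n by (intro eq_matI) auto
    have s1: "small 1 e1 (mat 1 1 (\<lambda>_. t0))" using t0n by (auto simp: small_def)
    have s2: "small 1 e1 ((x / t0) \<cdot>\<^sub>m mat 1 1 (\<lambda>_. t0))" using x em1[symmetric] by (auto simp: small_def)
    have cF: "F 1 (ut k 1 j (mat 1 1 (\<lambda>_. t0))) \<in> carrier_mat 1 1" using F_carrier ut_D[OF e1 s1] by auto
    have "F 1 (ut k 1 j (mat 1 1 (\<lambda>_. x))) = (x / t0) \<cdot>\<^sub>m F 1 (ut k 1 j (mat 1 1 (\<lambda>_. t0)))"
      unfolding em1 by (rule phi_sc[OF e1 _ s1 s2]) simp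
    also have "\<dots> = mat 1 1 (\<lambda>_. c j * x)"
      using cF t0n by (intro eq_matI) (auto simp: c_def)
    finally show ?thesis .
  qed
  show ?thesis using Fall[OF _ e1 H1] by blast
qed

end

theorem mainTheorem12:
  fixes k :: nat
    and D :: "nat \<Rightarrow> complex mat list set"
    and F :: "nat \<Rightarrow> complex mat list \<Rightarrow> complex mat"
  assumes "free_set k D"
    and "contains_nbhd_0 k D"
    and "free_function k D F"
    and "complex_linear_on D F"
  shows "\<exists>a :: nat \<Rightarrow> complex. \<forall>n\<ge>1. \<forall>X\<in>D n.
           F n X = mat n n (\<lambda>(r,c). \<Sum>j<k. a j * (X ! j $$ (r,c)))"
  using FF.main[OF FF.intro[OF assms]] .


end
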